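(* Assume $C\succ 0$, the matrices $A_1,\dots,A_m$ are linearly independent, and $C^{-1}$ is linearly feasible, i.e. $\mathrm{tr}(A_\ell C^{-1})=b_\ell$ for all $\ell\in[m]$. Let $X(t)$ be a differentiable solution of the first-ansatz dynamics $$\mathrm{vec}(\dot X) = -\bigl(I - G\mathcal{A}^T(\mathcal{A}G\mathcal{A}^T)^{-1} \mathcal{A}\bigr)G\,\mathrm{vec}(C),\qquad G=\tfrac12\bigl(C^{-1}\otimes X + X\otimes C^{-1}\bigr),$$ with $X(0)\succ 0$ linearly feasible. Then at every time $t$ with $X(t)\succ 0$, $$\frac{d}{dt}\ln\det X(t) = -n + b^T(\mathcal{A}G\mathcal{A}^T)^{-1}b \ \ge\ -n .$$ Consequently $X(T)\succ 0$ for every finite $T\ge 0$.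
   Context: We consider the SDP $\min\{\mathrm{tr}(CX): \mathrm{tr}(A_\ell X)=b_\ell\ \forall \ell\in[m],\ X\succeq 0\}$ with symmetric $n\times n$ matrices $C,A_1,\dots,A_m$ and $b\in\mathbb{R}^m$. For an $n\times n$ matrix $M$, $\mathrm{vec}(M)\in\mathbb{R}^{n^2}$ is obtained by stacking the columns of $M$; $\otimes$ is the Kronecker product, with $\mathrm{vec}(ABC)=(C^T\otimes A)\mathrm{vec}(B)$. $\mathcal{A}$ is the $m\times n^2$ matrix whose $\ell$-th row is $\mathrm{vec}(A_\ell)^T$. A matrix $X$ is linearly feasible if $\mathcal{A}\,\mathrm{vec}(X)=b$. *)

theory Defs
  imports "HOL-Analysis.Analysis"
begin

text \<open>vec(M): entries of M indexed by pairs (row i, column j); the pair type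
  plays the role of the column-stacked index (j-1)n+i.\<close>
definition vecm :: "real^'n^'n \<Rightarrow> real^('n \<times> 'n)" where
  "vecm M = (\<chi> p. M $ fst p $ snd p)"

text \<open>Kronecker product, compatible with column stacking:
  (P \<otimes> Q)_{(i,j),(k,l)} = P_{jl} Q_{ik}, so that vec(A B C) = (C^T \<otimes> A) vec(B).\<close>
definition kron :: "real^'n^'n \<Rightarrow> real^'n^'n \<Rightarrow> real^('n \<times> 'n)^('n \<times> 'n)" where
  "kron P Q = (\<chi> p q. P $ snd p $ snd q * Q $ fst p $ fst q)"

definition symmetric_mat :: "real^'n^'n \<Rightarrow> bool" where
  "symmetric_mat M \<longleftrightarrow> transpose M = M"

definition posdef :: "real^'n^'n \<Rightarrow> bool" where
  "posdef M \<longleftrightarrow> symmetric_mat M \<and> (\<forall>x. x \<noteq> 0 \<longrightarrow> x \<bullet> (M *v x) > 0)"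

definition constr_mat :: "('m \<Rightarrow> real^'n^'n) \<Rightarrow> real^('n \<times> 'n)^'m" where
  "constr_mat A = (\<chi> l. vecm (A l))"

definition Gmat :: "real^'n^'n \<Rightarrow> real^'n^'n \<Rightarrow> real^('n \<times> 'n)^('n \<times> 'n)" where
  "Gmat C X = (1/2) *\<^sub>R (kron (matrix_inv C) X + kron X (matrix_inv C))"

end

theory Submission
  imports Defs
begin

lemma sum_pair_UNIV:
  "(\<Sum>p\<in>(UNIV::('a::finite \<times> 'b::finite) set). f p) = (\<Sum>i\<in>UNIV. \<Sum>j\<in>UNIV. f (i,j))"
  unfolding sum.cartesian_product UNIV_Times_UNIV[symmetric] by (simp add: case_prod_beta)

lemma vecm_nth[simp]: "vecm M $ (i,j) = M $ i $ j"
  by (simp add: vecm_def)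

lemma vecm_add: "vecm (P + Q) = vecm P + vecm Q"
  by (simp add: vec_eq_iff vecm_def)
lemma vecm_diff: "vecm (P - Q) = vecm P - vecm Q"
  by (simp add: vec_eq_iff vecm_def)
lemma vecm_scaleR: "vecm (c *\<^sub>R P) = c *\<^sub>R vecm P"
  by (simp add: vec_eq_iff vecm_def)
lemma vecm_uminus: "vecm (- P) = - vecm P"
  by (simp add: vec_eq_iff vecm_def)
lemma vecm_inj: "vecm P = vecm Q \<Longrightarrow> P = Q"
  by (auto simp: vec_eq_iff vecm_def)
lemma vecm_zero[simp]: "vecm 0 = 0"
  by (simp add: vec_eq_iff vecm_def)

lemma kron_mulv: "kron P Q *v vecm B = vecm (Q ** B ** transpose P)"
proof -
  have "(kron P Q *v vecm B) $ (i,j) = vecm (Q ** B ** transpose P) $ (i,j)" for i j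
    apply (simp add: kron_def matrix_vector_mult_def matrix_matrix_mult_def transpose_def sum_pair_UNIV sum_distrib_right)
    apply (subst sum.swap) apply (simp add: mult_ac)
    done
  then show ?thesis by (simp add: vec_eq_iff)
qed

lemma inner_vecm: "vecm V \<bullet> vecm W = (\<Sum>i\<in>UNIV. \<Sum>j\<in>UNIV. V$i$j * W$i$j)"
  by (simp add: inner_vec_def sum_pair_UNIV)

lemma inner_mulv_transpose: "(x::real^'a) \<bullet> (M *v y) = (transpose M *v x) \<bullet> y"
  by (simp add: inner_vec_def matrix_vector_mult_def transpose_def sum_distrib_left sum_distrib_right mult_ac)
     (rule sum.swap)

lemma trace_mul_eq: "trace (V ** W) = (\<Sum>i\<in>UNIV. \<Sum>j\<in>UNIV. V$i$j * W$j$i)"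
  by (simp add: trace_def matrix_matrix_mult_def)

lemma transpose_kron: "transpose (kron P Q) = kron (transpose P) (transpose Q)"
  by (simp add: kron_def transpose_def vec_eq_iff)

lemma constrT_mulv:
  "transpose (constr_mat A) *v w = vecm (\<Sum>l\<in>UNIV. w$l *\<^sub>R A l)"
  by (simp add: vec_eq_iff constr_mat_def transpose_def matrix_vector_mult_def vecm_def sum_component mult.commute)

lemma constr_mulv:
  "(constr_mat A *v v) $ l = vecm (A l) \<bullet> v"
  by (simp add: constr_mat_def matrix_vector_mult_def inner_vec_def)

lemma scaleR_mulv: "(c *\<^sub>R M) *v (x::real^'a) = c *\<^sub>R (M *v x)"
  by (simp add: vec_eq_iff matrix_vector_mult_def sum_distrib_left mult_ac)

lemma Gmat_mulv:
  "Gmat C X *v vecm B = (1/2) *\<^sub>R (vecm (X ** B ** transpose (matrix_inv C)) + vecm (matrix_inv C ** B ** transpose X))"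
  by (simp add: Gmat_def kron_mulv scaleR_mulv matrix_vector_mult_add_rdistrib)


definition outer :: "real^'n \<Rightarrow> real^'n^'n" where
  "outer y = (\<chi> i j. y$i * y$j)"

lemma mulv_scaleR: "M *v (c *\<^sub>R x) = c *\<^sub>R (M *v (x::real^'a))"
  by (simp add: vec_eq_iff matrix_vector_mult_def sum_distrib_left mult_ac)

lemma axis_inner: "axis k (1::real) \<bullet> v = v $ k"
  by (simp add: inner_axis')

lemma mulv_axis: "(M *v axis j (1::real)) $ i = M $ i $ j"
  by (simp add: matrix_vector_mult_basis column_def)

lemma sym_inner: "transpose Y = Y \<Longrightarrow> (x::real^'n) \<bullet> (Y *v z) = z \<bullet> (Y *v x)"
  by (metis inner_commute inner_mulv_transpose)

lemma quad_diff_scale: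
  assumes "transpose Y = Y"
  shows "(x - a *\<^sub>R e) \<bullet> (Y *v (x - a *\<^sub>R e)) =
     x \<bullet> (Y *v x) - 2*a*(e \<bullet> (Y *v x)) + a^2 * (e \<bullet> (Y *v (e::real^'n)))"
proof -
  have "x \<bullet> (Y *v e) = e \<bullet> (Y *v x)" using sym_inner[OF assms] .
  then show ?thesis
    by (simp add: matrix_vector_mult_diff_distrib mulv_scaleR inner_diff_left inner_diff_right
        power2_eq_square algebra_simps)
qed

lemma outer_mulv: "outer y *v x = (y \<bullet> x) *\<^sub>R y"
  by (simp add: vec_eq_iff outer_def matrix_vector_mult_def inner_vec_def sum_distrib_left mult_ac)

lemma quad_outer: "x \<bullet> (outer y *v x) = (y \<bullet> x)^2"
  by (simp add: outer_mulv power2_eq_square inner_commute)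

lemma sumlist_outer_mulv:
  "sum_list (map outer ys) *v x = sum_list (map (\<lambda>y. (y \<bullet> x) *\<^sub>R y) ys)"
  by (induction ys) (simp_all add: matrix_vector_mult_add_rdistrib outer_mulv)

lemma quad_sumlist_outer:
  "x \<bullet> (sum_list (map outer ys) *v x) = sum_list (map (\<lambda>y. (y \<bullet> x)^2) ys)"
  by (induction ys) (simp_all add: matrix_vector_mult_add_rdistrib quad_outer inner_add_right)

lemma psd_decomp_aux:
  fixes I :: "'n::finite set"
  assumes "finite I"
  shows "\<forall>Y::real^'n^'n. transpose Y = Y \<longrightarrow> (\<forall>x. 0 \<le> x \<bullet> (Y *v x)) \<longrightarrow>
           (\<forall>i j. i \<notin> I \<or> j \<notin> I \<longrightarrow> Y$i$j = 0) \<longrightarrow> (\<exists>ys. Y = sum_list (map outer ys))"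
  using assms
proof (induction I rule: finite_induct)
  case empty
  show ?case
  proof (intro allI impI)
    fix Y :: "real^'n^'n"
    assume "\<forall>i j. i \<notin> {} \<or> j \<notin> {} \<longrightarrow> Y$i$j = 0"
    then have "Y = 0" by (simp add: vec_eq_iff)
    then show "\<exists>ys. Y = sum_list (map outer ys)" by (intro exI[of _ "[]"]) simp
  qed
next
  case (insert k I)
  show ?case
  proof (intro allI impI)
    fix Y :: "real^'n^'n"
    assume sym: "transpose Y = Y" and psd: "\<forall>x. 0 \<le> x \<bullet> (Y *v x)"
      and supp: "\<forall>i j. i \<notin> insert k I \<or> j \<notin> insert k I \<longrightarrow> Y$i$j = 0"
    have symE: "Y$i$j = Y$j$i" for i j
      using sym by (metis transpose_def vec_lambda_beta)
    let ?e = "\<lambda>i. axis i (1::real) :: real^'n"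
    have qa: "?e i \<bullet> (Y *v ?e j) = Y$i$j" for i j
      by (simp add: axis_inner mulv_axis)
    have ckk: "0 \<le> Y$k$k" using psd[rule_format, of "?e k"] qa by simp
    show "\<exists>ys. Y = sum_list (map outer ys)"
    proof (cases "Y$k$k = 0")
      case True
      have rowk: "Y$k$j = 0" for j
      proof (rule ccontr)
        assume ne: "Y$k$j \<noteq> 0"
        define a where "a = (Y$j$j + 1) / (2 * Y$k$j)"
        have "0 \<le> (?e j - a *\<^sub>R ?e k) \<bullet> (Y *v (?e j - a *\<^sub>R ?e k))"
          using psd by blast
        also have "\<dots> = Y$j$j - 2*a*Y$k$j"
          using quad_diff_scale[OF sym] True by (simp add: qa)
        also have "\<dots> = -1" using ne by (simp add: a_def field_simps)
        finally show False by simp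
      qed
      have "\<forall>i j. i \<notin> I \<or> j \<notin> I \<longrightarrow> Y$i$j = 0"
        using supp rowk symE by (metis insert_iff)
      then show ?thesis using insert.IH sym psd by blast
    next
      case False
      define c where "c = Y$k$k"
      have cpos: "0 < c" using False ckk c_def by simp
      define y where "y = (\<chi> i. Y$i$k / sqrt c)"
      define Y' where "Y' = Y - outer y"
      have outer_y: "outer y $ i $ j = Y$i$k * Y$j$k / c" for i j
        using cpos by (simp add: outer_def y_def real_sqrt_mult[symmetric] power2_eq_square[symmetric])
      have sym': "transpose Y' = Y'"
        using symE by (simp add: Y'_def vec_eq_iff transpose_def outer_y mult.commute)
      have supp': "\<forall>i j. i \<notin> I \<or> j \<notin> I \<longrightarrow> Y'$i$j = 0"
      proof (intro allI impI)
        fix i j assume "i \<notin> I \<or> j \<notin> I"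
        then consider "i = k" | "j = k" | "i \<notin> insert k I" | "j \<notin> insert k I" by auto
        then show "Y'$i$j = 0"
        proof cases
          case 1 then show ?thesis using cpos symE by (simp add: Y'_def outer_y c_def)
        next
          case 2 then show ?thesis using cpos symE by (simp add: Y'_def outer_y c_def)
        next
          case 3 then show ?thesis using supp by (simp add: Y'_def outer_y)
        next
          case 4 then show ?thesis using supp by (simp add: Y'_def outer_y)
        qed
      qed
      have psd': "0 \<le> x \<bullet> (Y' *v x)" for x
      proof -
        define \<beta> where "\<beta> = (Y *v x) $ k"
        have yx: "y \<bullet> x = \<beta> / sqrt c"
          by (simp add: \<beta>_def y_def inner_vec_def matrix_vector_mult_def sum_divide_distrib symE mult.commute)
        have "0 \<le> (x - (\<beta>/c) *\<^sub>R ?e k) \<bullet> (Y *v (x - (\<beta>/c) *\<^sub>R ?e k))"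
          using psd by blast
        also have "\<dots> = x \<bullet> (Y *v x) - 2*(\<beta>/c)*\<beta> + (\<beta>/c)^2*c"
          by (simp add: quad_diff_scale[OF sym] qa axis_inner mulv_axis \<beta>_def c_def)
        also have "\<dots> = x \<bullet> (Y *v x) - \<beta>^2 / c"
          using cpos by (simp add: field_simps power2_eq_square)
        also have "\<dots> = x \<bullet> (Y' *v x)"
          using cpos by (simp add: Y'_def matrix_vector_mult_diff_rdistrib inner_diff_right quad_outer yx
              power_divide)
        finally show ?thesis .
      qed
      obtain ys where ys: "Y' = sum_list (map outer ys)"
        using insert.IH sym' psd' supp' by blast
      have "Y = sum_list (map outer (y # ys))" using ys by (simp add: Y'_def algebra_simps)
      then show ?thesis by blast
    qed
  qed
qed

lemma psd_decomp:
  fixes Y :: "real^'n^'n"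
  assumes "transpose Y = Y" "\<forall>x. 0 \<le> x \<bullet> (Y *v x)"
  shows "\<exists>ys. Y = sum_list (map outer ys)"
  using psd_decomp_aux[of "UNIV::'n set"] assms by simp


definition jac :: "real^'n^'n \<Rightarrow> real^'n^'n \<Rightarrow> real" where
  "jac Y H = (\<Sum>k\<in>UNIV. det (\<chi> i. if i = k then H$i else Y$i))"

lemma comp_deriv:
  fixes X :: "real \<Rightarrow> real^'n^'m" and i :: 'm and j :: 'n
  assumes "(X has_vector_derivative X') F"
  shows "((\<lambda>s. X s $ i $ j) has_real_derivative X' $ i $ j) F"
proof -
  have bl: "bounded_linear (\<lambda>M::real^'n^'m. M $ i $ j)"
    using bounded_linear_compose[OF bounded_linear_vec_nth[of j] bounded_linear_vec_nth[of i]] by simp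
  show ?thesis
    unfolding has_real_derivative_iff_has_vector_derivative
    using bounded_linear.has_vector_derivative[OF bl assms] .
qed

lemma prod_real_deriv:
  assumes "\<And>i. i \<in> I \<Longrightarrow> (f i has_real_derivative D i) (at x within S)"
  shows "((\<lambda>x. \<Prod>i\<in>I. f i x) has_real_derivative (\<Sum>i\<in>I. D i * (\<Prod>j\<in>I-{i}. f j x))) (at x within S)"
proof -
  have "((\<lambda>x. \<Prod>i\<in>I. f i x) has_derivative (\<lambda>y. \<Sum>i\<in>I. D i * y * (\<Prod>j\<in>I-{i}. f j x))) (at x within S)"
    using assms unfolding has_field_derivative_def by (intro has_derivative_prod) auto
  then show ?thesis
    unfolding has_field_derivative_def
    by (rule has_derivative_eq_rhs) (auto simp: fun_eq_iff sum_distrib_left mult_ac)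
qed

lemma det_replace_row:
  "det (\<chi> i. if i = k then H$i else Y$i) =
   (\<Sum>p\<in>{p. p permutes (UNIV::'n::finite set)}. of_int (sign p) * (H$k$(p k) * (\<Prod>i\<in>UNIV-{k}. Y$i$(p i))))"
proof -
  have "(\<Prod>i\<in>UNIV. (\<chi> i. if i = k then H$i else Y$i) $ i $ p i) = H$k$(p k) * (\<Prod>i\<in>UNIV-{k}. Y$i$(p i))"
    for p :: "'n \<Rightarrow> 'n"
    by (simp add: prod.remove[of UNIV k])
  then show ?thesis unfolding det_def by simp
qed

lemma det_deriv:
  fixes X :: "real \<Rightarrow> real^'n^'n"
  assumes "(X has_vector_derivative X') (at t within S)"
  shows "((\<lambda>s. det (X s)) has_real_derivative jac (X t) X') (at t within S)"
proof -
  have c: "((\<lambda>s. X s $ i $ j) has_real_derivative X' $ i $ j) (at t within S)" for i j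
    using comp_deriv[OF assms] .
  have "((\<lambda>s. \<Sum>p\<in>{p. p permutes (UNIV::'n set)}. of_int (sign p) * (\<Prod>i\<in>UNIV. X s $ i $ p i))
      has_real_derivative
      (\<Sum>p\<in>{p. p permutes (UNIV::'n set)}. of_int (sign p) * (\<Sum>i\<in>UNIV. X' $ i $ p i * (\<Prod>j\<in>UNIV-{i}. X t $ j $ p j))))
      (at t within S)"
    by (intro DERIV_sum DERIV_cmult prod_real_deriv c)
  moreover have "(\<Sum>p\<in>{p. p permutes (UNIV::'n set)}. of_int (sign p) * (\<Sum>i\<in>UNIV. X' $ i $ p i * (\<Prod>j\<in>UNIV-{i}. X t $ j $ p j)))
      = jac (X t) X'"
    unfolding jac_def det_replace_row
    by (subst sum.swap) (simp add: sum_distrib_left)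
  ultimately show ?thesis unfolding det_def by simp
qed

lemma jac_inv:
  fixes Y :: "real^'n^'n"
  assumes "matrix_inv Y ** Y = mat 1"
  shows "jac Y H = det Y * trace (matrix_inv Y ** H)"
proof -
  let ?Yi = "matrix_inv Y"
  define z where "z k = transpose ?Yi *v H$k" for k
  have rowY: "row i Y = Y$i" for i by (simp add: row_def vec_eq_iff)
  have Hk: "sum (\<lambda>i. z k $ i *s Y $ i) UNIV = H$k" for k
  proof -
    have "transpose Y *v z k = H$k"
      unfolding z_def matrix_vector_mul_assoc matrix_transpose_mul[symmetric] assms by simp
    moreover have "transpose Y *v z k = sum (\<lambda>i. z k $ i *s Y $ i) UNIV"
      by (simp add: vec_eq_iff matrix_vector_mult_def transpose_def row_def sum_component mult.commute)
    ultimately show ?thesis by simp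
  qed
  have "det (\<chi> i. if i = k then H$i else Y$i) = z k $ k * det Y" for k
  proof -
    have "(\<chi> i. if i = k then H$i else Y$i) = (\<chi> i. if i = k then sum (\<lambda>i. z k $ i *s row i Y) UNIV else row i Y)"
      by (simp only: Hk rowY) (intro arg_cong[where f=vec_lambda] ext, simp)
    then show ?thesis using cramer_lemma_transpose[of k "z k" Y] by simp
  qed
  then have "jac Y H = (\<Sum>k\<in>UNIV. z k $ k) * det Y"
    by (simp add: jac_def sum_distrib_right)
  also have "(\<Sum>k\<in>UNIV. z k $ k) = trace (?Yi ** H)"
    unfolding trace_mul_eq z_def
    by (simp add: matrix_vector_mult_def transpose_def) (subst sum.swap, simp add: mult.commute)
  finally show ?thesis by simp
qed


lemma pd_sym: "posdef X \<Longrightarrow> transpose X = X"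
  by (simp add: posdef_def symmetric_mat_def)

lemma sym_entry: "transpose X = X \<Longrightarrow> X$i$j = X$j$i"
proof -
  assume a: "transpose X = X"
  have "transpose X $ j $ i = X $ j $ i" using a by simp
  then show ?thesis by (simp add: transpose_def)
qed

lemma pd_symE: "posdef X \<Longrightarrow> X$i$j = X$j$i"
  using sym_entry[OF pd_sym] .

lemma inv_props:
  assumes "invertible (X::real^'n^'n)"
  shows "X ** matrix_inv X = mat 1" "matrix_inv X ** X = mat 1"
proof -
  have "\<exists>A'. X ** A' = mat 1 \<and> A' ** X = mat 1" using assms unfolding invertible_def .
  then have "X ** matrix_inv X = mat 1 \<and> matrix_inv X ** X = mat 1"
    unfolding matrix_inv_def by (rule someI_ex)
  then show "X ** matrix_inv X = mat 1" "matrix_inv X ** X = mat 1" by auto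
qed

lemma kernel_invertible:
  fixes X :: "real^'n^'n"
  assumes "\<And>x. X *v x = 0 \<Longrightarrow> x = 0"
  shows "invertible X"
proof -
  have "inj ((*v) X)"
  proof (rule injI)
    fix x y assume "X *v x = X *v y"
    then have "X *v (x - y) = 0" by (simp add: matrix_vector_mult_diff_distrib)
    then show "x = y" using assms[of "x - y"] by simp
  qed
  then have "det (matrix ((*v) X)) \<noteq> 0"
    using det_nz_iff_inj[of "(*v) X"] by (simp add: matrix_vector_mul_linear)
  then show ?thesis by (simp add: invertible_det_nz)
qed

lemma pd_invertible:
  assumes "posdef X"
  shows "invertible X"
proof (rule kernel_invertible)
  fix x assume "X *v x = 0"
  then have "x \<bullet> (X *v x) = 0" by simp
  then show "x = 0" using assms unfolding posdef_def by force
qed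

lemma pd_matrix_inv:
  assumes "posdef X"
  shows "posdef (matrix_inv X)"
proof -
  let ?Y = "matrix_inv X"
  have i: "X ** ?Y = mat 1" "?Y ** X = mat 1" using inv_props[OF pd_invertible[OF assms]] by auto
  have sX: "transpose X = X" using pd_sym[OF assms] .
  have "transpose ?Y ** X = mat 1"
    using arg_cong[OF i(1), of transpose] by (simp add: matrix_transpose_mul sX)
  then have "transpose ?Y = ?Y"
    by (metis i(1) matrix_mul_assoc matrix_mul_lid matrix_mul_rid)
  moreover have "x \<bullet> (?Y *v x) > 0" if "x \<noteq> 0" for x
  proof -
    let ?u = "?Y *v x"
    have xu: "X *v ?u = x" by (simp add: matrix_vector_mul_assoc i)
    then have "?u \<noteq> 0" using that by auto
    then have "?u \<bullet> (X *v ?u) > 0" using assms unfolding posdef_def by blast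
    then show ?thesis using xu by (simp add: inner_commute)
  qed
  ultimately show ?thesis by (simp add: posdef_def symmetric_mat_def)
qed

lemma det_pos:
  fixes X :: "real^'n^'n"
  assumes "posdef X"
  shows "det X > 0"
proof -
  define Z where "Z s = (1 - s) *\<^sub>R mat 1 + s *\<^sub>R X" for s :: real
  have pdZ: "posdef (Z s)" if "0 \<le> s" "s \<le> 1" for s
  proof -
    have "transpose (Z s) = Z s"
      using pd_sym[OF assms] by (simp add: Z_def transpose_def vec_eq_iff mat_def)
    moreover have "x \<bullet> (Z s *v x) > 0" if "x \<noteq> 0" for x
    proof -
      have e: "x \<bullet> (Z s *v x) = (1 - s) * (x \<bullet> x) + s * (x \<bullet> (X *v x))"
        by (simp add: Z_def matrix_vector_mult_add_rdistrib scaleR_mulv inner_add_right)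
      have "x \<bullet> x > 0" "x \<bullet> (X *v x) > 0" using that assms by (auto simp: posdef_def)
      then show ?thesis unfolding e using \<open>0 \<le> s\<close> \<open>s \<le> 1\<close>
        by (cases "s = 1") (auto intro: add_pos_nonneg add_nonneg_pos)
    qed
    ultimately show ?thesis by (simp add: posdef_def symmetric_mat_def)
  qed
  have dZ: "(Z has_vector_derivative (X - mat 1)) (at s)" for s
    unfolding Z_def
    by (auto intro!: derivative_eq_intros simp: algebra_simps)
  have cont: "continuous_on {0..1} (\<lambda>s. det (Z s))"
    using det_deriv[OF dZ]
    by (meson DERIV_continuous continuous_at_imp_continuous_on)
  have nz: "det (Z s) \<noteq> 0" if "0 \<le> s" "s \<le> 1" for s
    using pd_invertible[OF pdZ[OF that]] by (simp add: invertible_det_nz)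
  have Z0: "det (Z 0) = 1" by (simp add: Z_def)
  have Z1: "Z 1 = X" by (simp add: Z_def)
  show ?thesis
  proof (rule ccontr)
    assume "\<not> det X > 0"
    then have "det (Z 1) \<le> 0" using Z1 by simp
    then obtain s where "0 \<le> s" "s \<le> 1" "det (Z s) = 0"
      using IVT2'[of "\<lambda>s. det (Z s)" 1 0 0] cont Z0 by auto
    then show False using nz by auto
  qed
qed

lemma psd_zero:
  fixes Y :: "real^'n^'n"
  assumes "transpose Y = Y" "\<forall>x. 0 \<le> x \<bullet> (Y *v x)" "x \<bullet> (Y *v x) = 0"
  shows "Y *v x = 0"
proof -
  obtain ys where Y: "Y = sum_list (map outer ys)" using psd_decomp[OF assms(1,2)] by blast
  have "sum_list (map (\<lambda>y. (y \<bullet> x)^2) ys) = 0 \<longrightarrow> sum_list (map (\<lambda>y. (y \<bullet> x) *\<^sub>R y) ys) = 0"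
  proof (induction ys)
    case Nil then show ?case by simp
  next
    case (Cons a ys)
    have "0 \<le> sum_list (map (\<lambda>y. (y \<bullet> x)^2) ys)" by (induction ys) auto
    then show ?case using Cons by (auto simp: add_nonneg_eq_0_iff)
  qed
  moreover have "sum_list (map (\<lambda>y. (y \<bullet> x)^2) ys) = 0"
    using assms(3) by (simp only: Y quad_sumlist_outer)
  ultimately show ?thesis by (simp add: Y sumlist_outer_mulv)
qed

definition frob :: "real^'n^'n \<Rightarrow> real^'n^'n \<Rightarrow> real" where
  "frob X Y = (\<Sum>i\<in>UNIV. \<Sum>j\<in>UNIV. X$i$j * Y$i$j)"

lemma frob_pos:
  fixes X Y :: "real^'n^'n"
  assumes "posdef X" "transpose Y = Y" "\<forall>x. 0 \<le> x \<bullet> (Y *v x)" "Y \<noteq> 0"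
  shows "frob X Y > 0"
proof -
  obtain ys where Y: "Y = sum_list (map outer ys)" using psd_decomp[OF assms(2,3)] by blast
  have fo: "frob X (outer y) = y \<bullet> (X *v y)" for y
    by (simp add: frob_def outer_def inner_vec_def matrix_vector_mult_def sum_distrib_left mult_ac)
  have fadd: "frob X (A + B) = frob X A + frob X B" for A B
    by (simp add: frob_def algebra_simps sum.distrib)
  have f0: "frob X 0 = 0" by (simp add: frob_def)
  have "0 \<le> frob X (sum_list (map outer ys)) \<and>
        (frob X (sum_list (map outer ys)) = 0 \<longrightarrow> sum_list (map outer ys) = 0)"
  proof (induction ys)
    case Nil then show ?case by (simp add: f0)
  next
    case (Cons a ys)
    have "0 \<le> a \<bullet> (X *v a)" using assms(1) unfolding posdef_def
      by (cases "a = 0") (auto simp: less_imp_le)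
    moreover have "a \<bullet> (X *v a) = 0 \<Longrightarrow> a = 0" using assms(1) unfolding posdef_def by force
    moreover have "outer (0::real^'n) = 0" by (simp add: outer_def vec_eq_iff)
    moreover have "frob X (sum_list (map outer (a # ys))) = a \<bullet> (X *v a) + frob X (sum_list (map outer ys))"
      by (simp add: fadd fo)
    ultimately show ?case using Cons by (auto simp: add_nonneg_eq_0_iff)
  qed
  then show ?thesis using assms(4) Y by force
qed


declare transpose_matrix_vector[simp del]

lemma inner_vecm_trace: "vecm V \<bullet> vecm W = trace (transpose V ** W)"
  by (simp add: inner_vecm trace_mul_eq transpose_def) (rule sum.swap)

lemma trace_mat1: "trace (mat 1 :: real^'n^'n) = real CARD('n)"
  by (simp add: trace_def mat_def)

lemma trace_sym_feas:
  assumes "transpose P = P"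
  shows "vecm Al \<bullet> vecm P = trace (Al ** P)"
proof -
  have "P$j$i = P$i$j" for i j using sym_entry[OF assms] .
  then show ?thesis unfolding inner_vecm trace_mul_eq by simp
qed

definition symv :: "real^('n::finite\<times>'n) \<Rightarrow> bool" where
  "symv v \<longleftrightarrow> (\<forall>i j. v$(i,j) = v$(j,i))"

lemma symv_vecm: "transpose S = S \<Longrightarrow> symv (vecm S)"
  by (simp add: symv_def sym_entry)

lemma symv_diff: "symv u \<Longrightarrow> symv v \<Longrightarrow> symv (u - v)"
  by (simp add: symv_def)
lemma symv_uminus: "symv u \<Longrightarrow> symv (- u)"
  by (simp add: symv_def)

lemma G_symv:
  assumes "transpose (matrix_inv C) = matrix_inv C" "transpose S = S"
  shows "symv (Gmat C X *v vecm S)"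
proof -
  let ?P = "matrix_inv C"
  have t: "transpose (X ** S ** transpose ?P) = ?P ** S ** transpose X"
    using assms by (simp add: matrix_transpose_mul matrix_mul_assoc)
  have "(X ** S ** transpose ?P) $ j $ i = (?P ** S ** transpose X) $ i $ j" for i j
  proof -
    have "(X ** S ** transpose ?P) $ j $ i = transpose (X ** S ** transpose ?P) $ i $ j"
      by (simp add: transpose_def)
    then show ?thesis using t by simp
  qed
  then show ?thesis
    by (simp add: Gmat_mulv symv_def)
qed

lemma transpose_sum_sym:
  assumes "\<forall>l. symmetric_mat (A l)"
  shows "transpose (\<Sum>l\<in>UNIV. w$l *\<^sub>R A l) = (\<Sum>l\<in>UNIV. w$l *\<^sub>R (A l :: real^'n^'n))"
proof -
  have "A l $ j $ i = A l $ i $ j" for l i j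
    using assms sym_entry[of "A l"] by (simp add: symmetric_mat_def)
  then show ?thesis by (simp add: vec_eq_iff transpose_def sum_component)
qed

lemma ode_expand:
  fixes G :: "real^'k^'k" and AT :: "real^'m^'k" and Mi :: "real^'m^'m" and Am :: "real^'k^'m"
  shows   "((mat 1 - G ** AT ** Mi ** Am) ** G) *v v = G *v v - G *v (AT *v (Mi *v (Am *v (G *v v))))"
  by (simp add: matrix_vector_mul_assoc[symmetric] matrix_vector_mult_diff_rdistrib)

lemma neg_mulv: "(- M) *v (x::real^'a) = - (M *v x)"
  by (simp add: vec_eq_iff matrix_vector_mult_def sum_negf)

lemma Xprime_sym:
  fixes C :: "real^'n^'n" and A :: "'m::finite \<Rightarrow> real^'n^'n"
  assumes C_pd: "posdef C"
    and A_sym: "\<forall>l. symmetric_mat (A l)"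
    and ode: "vecm X' = - ((mat 1 - Gmat C X ** transpose (constr_mat A)
              ** matrix_inv (constr_mat A ** Gmat C X ** transpose (constr_mat A))
              ** constr_mat A) ** Gmat C X) *v vecm C"
  shows "transpose X' = X'"
proof -
  let ?G = "Gmat C X" and ?AT = "transpose (constr_mat A)"
  let ?Mi = "matrix_inv (constr_mat A ** ?G ** ?AT)"
  define w where "w = ?Mi *v (constr_mat A *v (?G *v vecm C))"
  have sP: "transpose (matrix_inv C) = matrix_inv C" using pd_sym[OF pd_matrix_inv[OF C_pd]] .
  have "vecm X' = - (?G *v vecm C - ?G *v (?AT *v w))"
    unfolding ode neg_mulv ode_expand w_def ..
  then have v: "vecm X' = - (?G *v vecm C - ?G *v vecm (\<Sum>l\<in>UNIV. w$l *\<^sub>R A l))"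
    by (simp only: constrT_mulv)
  have "symv (vecm X')"
    unfolding v
    by (intro symv_uminus symv_diff G_symv sP pd_sym[OF C_pd] transpose_sum_sym A_sym)
  then show ?thesis
    by (simp add: symv_def vec_eq_iff transpose_def)
qed

lemma transpose_Gmat:
  assumes "transpose (matrix_inv C) = matrix_inv C" "transpose X = X"
  shows "transpose (Gmat C X) = Gmat C X"
proof -
  have ta: "transpose (P + Q) = transpose P + transpose (Q::real^'k^'k)" for P Q
    by (simp add: vec_eq_iff transpose_def)
  have ts: "transpose (c *\<^sub>R P) = c *\<^sub>R transpose (P::real^'k^'k)" for c P
    by (simp add: vec_eq_iff transpose_def)
  show ?thesis
    unfolding Gmat_def ts ta transpose_kron assms ..
qed

lemma pointwise:
  fixes C :: "real^'n^'n" and A :: "'m::finite \<Rightarrow> real^'n^'n" and b :: "real^'m"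
  assumes C_pd: "posdef C"
    and A_sym: "\<forall>l. symmetric_mat (A l)"
    and A_indep: "\<forall>c :: 'm \<Rightarrow> real. (\<Sum>l\<in>UNIV. c l *\<^sub>R A l) = 0 \<longrightarrow> (\<forall>l. c l = 0)"
    and X_pd: "posdef X"
    and ode: "vecm X' = - ((mat 1 - Gmat C X ** transpose (constr_mat A)
              ** matrix_inv (constr_mat A ** Gmat C X ** transpose (constr_mat A))
              ** constr_mat A) ** Gmat C X) *v vecm C"
  shows "constr_mat A *v vecm X' = 0"
    and "constr_mat A *v vecm X = b \<Longrightarrow> (\<forall>l. trace (A l ** matrix_inv C) = b $ l) \<Longrightarrow>
           trace (matrix_inv X ** X') = - real CARD('n) +
           b \<bullet> (matrix_inv (constr_mat A ** Gmat C X ** transpose (constr_mat A)) *v b)"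
    and "0 \<le> b \<bullet> (matrix_inv (constr_mat A ** Gmat C X ** transpose (constr_mat A)) *v b)"
proof -
  let ?P = "matrix_inv C"
  let ?G = "Gmat C X" and ?Am = "constr_mat A" and ?AT = "transpose (constr_mat A)"
  let ?M = "?Am ** ?G ** ?AT"
  let ?Mi = "matrix_inv ?M"
  have P_pd: "posdef ?P" using pd_matrix_inv[OF C_pd] .
  have sP: "transpose ?P = ?P" using pd_sym[OF P_pd] .
  have sX: "transpose X = X" using pd_sym[OF X_pd] .
  have CP: "C ** ?P = mat 1" "?P ** C = mat 1" using inv_props[OF pd_invertible[OF C_pd]] by auto
  have XCP: "X ** C ** ?P = X" by (simp add: matrix_mul_assoc[symmetric] CP)
  have GC: "?G *v vecm C = vecm X" 
    by (simp add: Gmat_mulv sP CP sX XCP vecm_add[symmetric] vecm_scaleR[symmetric])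
  have quad: "y \<bullet> (?M *v y) = frob X (S ** ?P ** S)" if S: "S = (\<Sum>l\<in>UNIV. y$l *\<^sub>R A l)" for y S
  proof -
    have sS: "transpose S = S" using transpose_sum_sym[OF A_sym] S by simp
    have "y \<bullet> (?M *v y) = (?AT *v y) \<bullet> (?G *v (?AT *v y))"
      by (simp add: matrix_vector_mul_assoc[symmetric] inner_mulv_transpose[of y ?Am])
    also have "\<dots> = vecm S \<bullet> (?G *v vecm S)" by (simp add: constrT_mulv S)
    also have "\<dots> = (1/2) * (vecm S \<bullet> vecm (X ** S ** ?P) + vecm S \<bullet> vecm (?P ** S ** X))"
      by (simp add: Gmat_mulv sP sX inner_add_right)
    also have "vecm S \<bullet> vecm (X ** S ** ?P) = frob X (S ** ?P ** S)"
    proof -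
      have "vecm S \<bullet> vecm (X ** S ** ?P) = trace (S ** (X ** S ** ?P))" by (simp add: inner_vecm_trace sS)
      also have "\<dots> = trace ((X ** S ** ?P) ** S)" by (rule trace_mul_sym)
      also have "\<dots> = trace (transpose X ** (S ** ?P ** S))" by (simp add: sX matrix_mul_assoc)
      also have "\<dots> = frob X (S ** ?P ** S)" by (simp add: frob_def inner_vecm[symmetric] inner_vecm_trace)
      finally show ?thesis .
    qed
    also have "vecm S \<bullet> vecm (?P ** S ** X) = frob X (S ** ?P ** S)"
    proof -
      have "vecm S \<bullet> vecm (?P ** S ** X) = trace (S ** (?P ** S ** X))" by (simp add: inner_vecm_trace sS)
      also have "\<dots> = trace ((S ** ?P ** S) ** X)" by (simp add: matrix_mul_assoc)
      also have "\<dots> = trace (X ** (S ** ?P ** S))" by (rule trace_mul_sym)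
      also have "\<dots> = frob X (S ** ?P ** S)" by (simp add: sX frob_def inner_vecm[symmetric] inner_vecm_trace)
      finally show ?thesis .
    qed
    finally show ?thesis by simp
  qed
  have Mpos: "y \<bullet> (?M *v y) > 0" if "y \<noteq> 0" for y
  proof -
    define S where "S = (\<Sum>l\<in>UNIV. y$l *\<^sub>R A l)"
    have sS: "transpose S = S" using transpose_sum_sym[OF A_sym] S_def by simp
    let ?Y = "S ** ?P ** S"
    have sY: "transpose ?Y = ?Y" by (simp add: matrix_transpose_mul sS sP matrix_mul_assoc)
    have qY: "x \<bullet> (?Y *v x) = (S *v x) \<bullet> (?P *v (S *v x))" for x
      by (simp add: matrix_vector_mul_assoc[symmetric] inner_mulv_transpose[of x S] sS)
    have psdY: "\<forall>x. 0 \<le> x \<bullet> (?Y *v x)"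
    proof
      fix x show "0 \<le> x \<bullet> (?Y *v x)" unfolding qY using P_pd unfolding posdef_def
        by (cases "S *v x = 0") (auto intro: less_imp_le)
    qed
    have "?Y \<noteq> 0"
    proof
      assume Y0: "?Y = 0"
      have "S *v x = 0" for x
      proof -
        have "(S *v x) \<bullet> (?P *v (S *v x)) = 0" using qY[of x] Y0 by simp
        then show ?thesis using P_pd unfolding posdef_def by force
      qed
      then have "S $ i $ j = 0" for i j using mulv_axis[of S j i] by simp
      then have "S = 0" by (simp add: vec_eq_iff)
      then have "\<forall>l. y $ l = 0" using A_indep S_def by auto
      then show False using that by (simp add: vec_eq_iff)
    qed
    then have "frob X ?Y > 0" using frob_pos[OF X_pd sY psdY] by simp
    then show ?thesis using quad[OF S_def] by simp
  qed
  have Mnn: "0 \<le> y \<bullet> (?M *v y)" for y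
    using Mpos[of y] by (cases "y = 0") auto
  have Minv: "?M ** ?Mi = mat 1"
  proof -
    have "invertible ?M"
    proof (rule kernel_invertible)
      fix y assume "?M *v y = 0"
      then have "y \<bullet> (?M *v y) = 0" by simp
      then show "y = 0" using Mpos by force
    qed
    then show ?thesis using inv_props by blast
  qed
  have v0: "vecm X' = - (?G *v vecm C - ?G *v (?AT *v (?Mi *v (?Am *v (?G *v vecm C)))))"
    unfolding ode neg_mulv ode_expand ..
  have MMu: "?Am *v (?G *v (?AT *v (?Mi *v u))) = u" for u
    by (simp add: matrix_vector_mul_assoc matrix_mul_assoc Minv)
  show "?Am *v vecm X' = 0"
    unfolding v0 by (simp add: matrix_vector_mult_diff_distrib MMu)
  have "b \<bullet> (?Mi *v b) = (?M *v (?Mi *v b)) \<bullet> (?Mi *v b)"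
    by (simp add: matrix_vector_mul_assoc Minv)
  also have "\<dots> \<ge> 0" using Mnn by (simp add: inner_commute)
  finally show "0 \<le> b \<bullet> (?Mi *v b)" .
  assume feas: "?Am *v vecm X = b" and Cinv_feas: "\<forall>l. trace (A l ** ?P) = b $ l"
  have v: "vecm X' = - (vecm X - ?G *v (?AT *v (?Mi *v b)))"
    unfolding v0 GC feas ..
  let ?Xi = "matrix_inv X"
  have Xi_pd: "posdef ?Xi" using pd_matrix_inv[OF X_pd] .
  have sXi: "transpose ?Xi = ?Xi" using pd_sym[OF Xi_pd] .
  have XXi: "X ** ?Xi = mat 1" "?Xi ** X = mat 1" using inv_props[OF pd_invertible[OF X_pd]] by auto
  have PXX: "?P ** ?Xi ** X = ?P" by (simp add: matrix_mul_assoc[symmetric] XXi)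
  have GXi: "?G *v vecm ?Xi = vecm ?P"
    by (simp add: Gmat_mulv sP sX XXi PXX vecm_add[symmetric] vecm_scaleR[symmetric])
  have AP: "?Am *v vecm ?P = b"
    using Cinv_feas trace_sym_feas[OF sP] by (simp add: vec_eq_iff constr_mulv)
  have "trace (?Xi ** X') = vecm ?Xi \<bullet> vecm X'" by (simp add: inner_vecm_trace sXi)
  also have "\<dots> = - (vecm ?Xi \<bullet> vecm X) + vecm ?Xi \<bullet> (?G *v (?AT *v (?Mi *v b)))"
    unfolding v by (simp add: inner_diff_right)
  also have "vecm ?Xi \<bullet> vecm X = real CARD('n)"
    by (simp add: inner_vecm_trace sXi XXi trace_mat1)
  also have "vecm ?Xi \<bullet> (?G *v (?AT *v (?Mi *v b))) = b \<bullet> (?Mi *v b)"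
  proof -
    have "vecm ?Xi \<bullet> (?G *v (?AT *v (?Mi *v b))) = (transpose ?G *v vecm ?Xi) \<bullet> (?AT *v (?Mi *v b))"
      by (rule inner_mulv_transpose)
    also have "\<dots> = vecm ?P \<bullet> (?AT *v (?Mi *v b))" by (simp add: transpose_Gmat[OF sP sX] GXi)
    also have "\<dots> = (?Am *v vecm ?P) \<bullet> (?Mi *v b)" by (simp add: inner_mulv_transpose[of _ ?AT])
    finally show ?thesis by (simp add: AP)
  qed
  finally show "trace (?Xi ** X') = - real CARD('n) + b \<bullet> (?Mi *v b)" by simp
qed


declare transpose_matrix_vector[simp del]

lemma lin_deriv:
  fixes X :: "real \<Rightarrow> real^'n^'n"
  assumes "(X has_vector_derivative X') (at t within S)"
  shows "((\<lambda>s. \<Sum>i\<in>UNIV. \<Sum>j\<in>UNIV. K i j * X s $ i $ j) has_real_derivative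
          (\<Sum>i\<in>UNIV. \<Sum>j\<in>UNIV. K i j * X' $ i $ j)) (at t within S)"
  by (intro DERIV_sum DERIV_cmult comp_deriv assms)

lemma quad_eq: "x \<bullet> (M *v x) = (\<Sum>i\<in>UNIV. \<Sum>j\<in>UNIV. (x$i * x$j) * M$i$j)"
  by (simp add: inner_vec_def matrix_vector_mult_def sum_distrib_left mult_ac)

lemma feas_eq: "(constr_mat A *v vecm M) $ l = (\<Sum>i\<in>UNIV. \<Sum>j\<in>UNIV. A l $ i $ j * M $ i $ j)"
  by (simp add: constr_mulv inner_vecm)

lemma const_on:
  fixes f :: "real \<Rightarrow> real"
  assumes "convex S" "\<forall>t\<in>S. (f has_real_derivative 0) (at t within S)" "t \<in> S" "s \<in> S"
  shows "f t = f s"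
proof -
  have "\<And>x. x \<in> S \<Longrightarrow> (f has_derivative (\<lambda>h. 0)) (at x within S)"
  proof -
    have e: "((*) (0::real)) = (\<lambda>h. 0)" by (simp add: fun_eq_iff)
    show "\<And>x. x \<in> S \<Longrightarrow> (f has_derivative (\<lambda>h. 0)) (at x within S)"
      using assms(2) unfolding has_field_derivative_def e by blast
  qed
  then obtain c where "\<forall>x\<in>S. f x = c" using has_derivative_zero_constant[OF assms(1)] by blast
  then show ?thesis using assms(3,4) by simp
qed

lemma coercive:
  fixes Y :: "real^'n^'n"
  assumes "posdef Y"
  shows "\<exists>e>0. \<forall>x. e * (x \<bullet> x) \<le> x \<bullet> (Y *v x)"
proof -
  let ?f = "\<lambda>x. x \<bullet> (Y *v x)"
  have cont: "continuous_on (sphere 0 1) ?f"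
    by (intro continuous_on_inner continuous_on_id matrix_vector_mult_linear_continuous_on)
  have ne: "sphere (0::real^'n) 1 \<noteq> {}"
  proof -
    have "axis undefined (1::real) \<in> sphere (0::real^'n) 1" by simp
    then show ?thesis by blast
  qed
  obtain x0 where x0: "x0 \<in> sphere 0 1" "\<forall>y\<in>sphere 0 1. ?f x0 \<le> ?f y"
    using continuous_attains_inf[OF compact_sphere ne cont] by blast
  have "x0 \<noteq> 0" using x0(1) by auto
  then have epos: "?f x0 > 0" using assms unfolding posdef_def by blast
  have "?f x0 * (x \<bullet> x) \<le> ?f x" for x
  proof (cases "x = 0")
    case True then show ?thesis by simp
  next
    case False
    let ?u = "(1 / norm x) *\<^sub>R x"
    have "?u \<in> sphere 0 1" using False by simp
    then have "?f x0 \<le> ?f ?u" using x0 by blast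
    also have "?f ?u = ?f x / (norm x)^2"
      by (simp add: mulv_scaleR power2_eq_square)
    finally have "?f x0 * (norm x)^2 \<le> ?f x" using False by (simp add: field_simps)
    then show ?thesis by (simp add: power2_norm_eq_inner)
  qed
  then show ?thesis using epos by blast
qed

lemma perturb:
  fixes D :: "real^'n^'n"
  shows "\<bar>x \<bullet> (D *v x)\<bar> \<le> (\<Sum>i\<in>UNIV. \<Sum>j\<in>UNIV. \<bar>D$i$j\<bar>) * (x \<bullet> x)"
proof -
  have xx: "\<bar>x$i * x$j\<bar> \<le> x \<bullet> x" for i j
  proof -
    have "\<bar>x$i\<bar> * \<bar>x$j\<bar> \<le> norm x * norm x"
      by (intro mult_mono component_le_norm_cart) auto
    then show ?thesis by (simp add: abs_mult power2_norm_eq_inner[symmetric] power2_eq_square)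
  qed
  have "\<bar>x \<bullet> (D *v x)\<bar> \<le> (\<Sum>i\<in>UNIV. \<bar>\<Sum>j\<in>UNIV. (x$i * x$j) * D$i$j\<bar>)"
    unfolding quad_eq by (rule sum_abs)
  also have "\<dots> \<le> (\<Sum>i\<in>UNIV. \<Sum>j\<in>UNIV. \<bar>(x$i * x$j) * D$i$j\<bar>)"
    by (intro sum_mono sum_abs)
  also have "\<dots> \<le> (\<Sum>i\<in>UNIV. \<Sum>j\<in>UNIV. \<bar>D$i$j\<bar> * (x \<bullet> x))"
  proof (intro sum_mono)
    fix i j
    have "\<bar>D$i$j\<bar> * \<bar>x$i * x$j\<bar> \<le> \<bar>D$i$j\<bar> * (x \<bullet> x)" by (rule mult_left_mono[OF xx abs_ge_zero])
    then show "\<bar>(x$i * x$j) * D$i$j\<bar> \<le> \<bar>D$i$j\<bar> * (x \<bullet> x)" by (simp only: abs_mult mult.commute)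
  qed
  also have "\<dots> = (\<Sum>i\<in>UNIV. \<Sum>j\<in>UNIV. \<bar>D$i$j\<bar>) * (x \<bullet> x)"
    by (simp add: sum_distrib_right)
  finally show ?thesis .
qed

lemma pd_open:
  fixes X :: "real \<Rightarrow> real^'n^'n"
  assumes pd: "posdef (X \<tau>)" and cont: "continuous (at \<tau> within S) X"
    and sym: "\<forall>s\<in>S. transpose (X s) = X s"
  shows "eventually (\<lambda>s. posdef (X s)) (at \<tau> within S)"
proof -
  obtain e where e: "e > 0" "\<forall>x. e * (x \<bullet> x) \<le> x \<bullet> (X \<tau> *v x)" using coercive[OF pd] by blast
  define h where "h s = (\<Sum>i\<in>UNIV. \<Sum>j\<in>UNIV. \<bar>(X s - X \<tau>)$i$j\<bar>)" for s
  have "(X \<longlongrightarrow> X \<tau>) (at \<tau> within S)" using cont by (simp add: continuous_within)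
  then have "(h \<longlongrightarrow> (\<Sum>i\<in>UNIV. \<Sum>j\<in>UNIV. \<bar>(X \<tau> - X \<tau>)$i$j\<bar>)) (at \<tau> within S)"
    unfolding h_def by (intro tendsto_intros)
  then have "(h \<longlongrightarrow> 0) (at \<tau> within S)" by simp
  then have ev1: "eventually (\<lambda>s. h s < e) (at \<tau> within S)" using e(1) by (simp add: order_tendstoD)
  have ev2: "eventually (\<lambda>s. s \<in> S) (at \<tau> within S)" by (simp add: eventually_at_filter)
  show ?thesis
  proof (rule eventually_mono[OF eventually_conj[OF ev1 ev2]])
    fix s assume hs: "h s < e \<and> s \<in> S"
    have "x \<bullet> (X s *v x) > 0" if "x \<noteq> 0" for x
    proof -
      have xx: "x \<bullet> x > 0" using that by simp
      have "\<bar>x \<bullet> ((X s - X \<tau>) *v x)\<bar> \<le> h s * (x \<bullet> x)" unfolding h_def by (rule perturb)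
      moreover have "x \<bullet> (X s *v x) = x \<bullet> (X \<tau> *v x) + x \<bullet> ((X s - X \<tau>) *v x)"
        by (simp add: matrix_vector_mult_diff_rdistrib inner_diff_right)
      moreover have "h s * (x \<bullet> x) < e * (x \<bullet> x)" using hs xx by simp
      ultimately show ?thesis using e(2)[rule_format, of x] by linarith
    qed
    then show "posdef (X s)" using sym hs by (simp add: posdef_def symmetric_mat_def)
  qed
qed


declare transpose_matrix_vector[simp del]

theorem theorem4p2:
  fixes C :: "real^'n^'n"
    and A :: "'m::finite \<Rightarrow> real^'n^'n"
    and b :: "real^'m"
    and X X' :: "real \<Rightarrow> real^'n^'n"
  assumes C_pd: "posdef C"
    and A_sym: "\<forall>l. symmetric_mat (A l)"
    and A_indep: "\<forall>c :: 'm \<Rightarrow> real. (\<Sum>l\<in>UNIV. c l *\<^sub>R A l) = 0 \<longrightarrow> (\<forall>l. c l = 0)"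
    and Cinv_feas: "\<forall>l. trace (A l ** matrix_inv C) = b $ l"
    and X_deriv: "\<forall>t\<ge>0. (X has_vector_derivative X' t) (at t within {0..})"
    and X_ode: "\<forall>t\<ge>0. vecm (X' t) =
        - ((mat 1 - Gmat C (X t) ** transpose (constr_mat A)
              ** matrix_inv (constr_mat A ** Gmat C (X t) ** transpose (constr_mat A))
              ** constr_mat A) ** Gmat C (X t)) *v vecm C"
    and X0_pd: "posdef (X 0)"
    and X0_feas: "constr_mat A *v vecm (X 0) = b"
  shows "(\<forall>t\<ge>0. posdef (X t) \<longrightarrow>
            ((\<lambda>s. ln (det (X s))) has_real_derivative
               (- real CARD('n) + b \<bullet> (matrix_inv (constr_mat A ** Gmat C (X t) ** transpose (constr_mat A)) *v b)))
               (at t within {0..})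
            \<and> - real CARD('n) + b \<bullet> (matrix_inv (constr_mat A ** Gmat C (X t) ** transpose (constr_mat A)) *v b)
                \<ge> - real CARD('n))
         \<and> (\<forall>T\<ge>0. posdef (X T))"

proof -
  let ?n = "real CARD('n)"
  let ?Am = "constr_mat A"
  define D where "D t = - real CARD('n) + b \<bullet> (matrix_inv (constr_mat A ** Gmat C (X t) ** transpose (constr_mat A)) *v b)" for t
  have sym_all: "transpose (X t) = X t" if "t \<ge> 0" for t
  proof -
    have "X t $ i $ j = X t $ j $ i" for i j
    proof -
      define f where "f s = X s $ i $ j - X s $ j $ i" for s
      have "(f has_real_derivative 0) (at s within {0..})" if "s \<in> {0..}" for s
      proof -
        have sX': "transpose (X' s) = X' s"
          using Xprime_sym[OF C_pd A_sym] X_ode that by auto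
        have "(f has_real_derivative (X' s $ i $ j - X' s $ j $ i)) (at s within {0..})"
          unfolding f_def using X_deriv that by (intro DERIV_diff comp_deriv) auto
        then show ?thesis using sym_entry[OF sX', of i j] by simp
      qed
      then have "f t = f 0" using const_on[of "{0..}" f t 0] that by auto
      moreover have "f 0 = 0" using pd_symE[OF X0_pd] by (simp add: f_def)
      ultimately show ?thesis by (simp add: f_def)
    qed
    then show ?thesis by (simp add: vec_eq_iff transpose_def)
  qed
  have feas_on: "\<forall>s\<in>{0..<u}. ?Am *v vecm (X s) = b" if pdu: "\<forall>s\<in>{0..<u}. posdef (X s)" for u
  proof
    fix s assume s: "s \<in> {0..<u}"
    have "(?Am *v vecm (X s)) $ l = b $ l" for l
    proof -
      define g where "g r = (\<Sum>i\<in>UNIV. \<Sum>j\<in>UNIV. A l $ i $ j * X r $ i $ j)" for r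
      have "(g has_real_derivative 0) (at r within {0..<u})" if r: "r \<in> {0..<u}" for r
      proof -
        have "(g has_real_derivative (\<Sum>i\<in>UNIV. \<Sum>j\<in>UNIV. A l $ i $ j * X' r $ i $ j)) (at r within {0..})"
          unfolding g_def using X_deriv r by (intro lin_deriv) auto
        moreover have "(\<Sum>i\<in>UNIV. \<Sum>j\<in>UNIV. A l $ i $ j * X' r $ i $ j) = 0"
        proof -
          have "?Am *v vecm (X' r) = 0"
            using pointwise(1)[OF C_pd A_sym A_indep, of "X r" "X' r"] pdu r X_ode by auto
          then show ?thesis using feas_eq[of A "X' r" l] by simp
        qed
        ultimately show ?thesis by (auto intro: DERIV_subset)
      qed
      then have "g s = g 0" using const_on[of "{0..<u}" g s 0] s by auto
      moreover have "g 0 = b $ l" using X0_feas feas_eq[of A "X 0" l] by (simp add: g_def)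
      moreover have "g s = (?Am *v vecm (X s)) $ l" using feas_eq[of A "X s" l] by (simp add: g_def)
      ultimately show ?thesis by simp
    qed
    then show "?Am *v vecm (X s) = b" by (simp add: vec_eq_iff)
  qed
  have lnderiv: "((\<lambda>s. ln (det (X s))) has_real_derivative D t) (at t within {0..}) \<and> D t \<ge> - ?n"
    if t: "t \<ge> 0" and pdt: "posdef (X t)" and ft: "?Am *v vecm (X t) = b" for t
  proof -
    have dd: "((\<lambda>s. det (X s)) has_real_derivative jac (X t) (X' t)) (at t within {0..})"
      using det_deriv[of X "X' t" t "{0..}"] X_deriv t by auto
    have dpos: "det (X t) > 0" using det_pos[OF pdt] .
    have "jac (X t) (X' t) = det (X t) * D t"
      unfolding D_def
      using jac_inv[OF inv_props(2)[OF pd_invertible[OF pdt]]]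
        pointwise(2)[OF C_pd A_sym A_indep pdt, of "X' t" b] X_ode t ft Cinv_feas by auto
    moreover have "((\<lambda>s. ln (det (X s))) has_real_derivative (1 / det (X t)) * jac (X t) (X' t)) (at t within {0..})"
      by (rule DERIV_chain2[OF DERIV_ln_divide[OF dpos] dd])
    ultimately have "((\<lambda>s. ln (det (X s))) has_real_derivative D t) (at t within {0..})"
      using dpos by simp
    moreover have "D t \<ge> - ?n"
      unfolding D_def using pointwise(3)[OF C_pd A_sym A_indep pdt, of "X' t" b] X_ode t by auto
    ultimately show ?thesis by blast
  qed
  have allpd: "\<forall>T\<ge>0. posdef (X T)"
  proof (rule ccontr)
    assume notall: "\<not> (\<forall>T\<ge>0. posdef (X T))"
    define N where "N = {t. 0 \<le> t \<and> \<not> posdef (X t)}"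
    have Nne: "N \<noteq> {}" using notall by (auto simp: N_def)
    have Nbdd: "bdd_below N" by (auto simp: N_def bdd_below_def)
    define \<tau> where "\<tau> = Inf N"
    have tau0: "\<tau> \<ge> 0" unfolding \<tau>_def using Nne by (intro cInf_greatest) (auto simp: N_def)
    have below: "posdef (X s)" if "0 \<le> s" "s < \<tau>" for s
    proof (rule ccontr)
      assume "\<not> posdef (X s)"
      then have "s \<in> N" using that by (simp add: N_def)
      then have "\<tau> \<le> s" unfolding \<tau>_def using Nbdd by (rule cInf_lower)
      then show False using that by simp
    qed
    have pdtau: "posdef (X \<tau>)"
    proof (cases "\<tau> = 0")
      case True then show ?thesis using X0_pd by simp
    next
      case False
      then have tpos: "\<tau> > 0" using tau0 by simp
      have fb: "?Am *v vecm (X s) = b" if "0 \<le> s" "s < \<tau>" for s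
        using feas_on[of \<tau>] below that by auto
      define L where "L s = ln (det (X s)) + ?n * s" for s
      have Lder: "(L has_real_derivative (D s + ?n)) (at s within {0..}) \<and> D s + ?n \<ge> 0"
        if "0 \<le> s" "s < \<tau>" for s
      proof -
        have "((\<lambda>s. ?n * s) has_real_derivative ?n) (at s within {0..})"
          by (auto intro!: derivative_eq_intros)
        then show ?thesis unfolding L_def
          using lnderiv[OF that(1) below[OF that] fb[OF that]] by (auto intro: DERIV_add)
      qed
      have Lmono: "L 0 \<le> L s" if "0 \<le> s" "s < \<tau>" for s
      proof (rule DERIV_nonneg_imp_increasing_open[OF that(1)])
        fix x assume x: "0 < x" "x < s"
        have "at x within {0..} = at x" by (rule at_within_open_subset[of x "{0<..}"]) (use x in auto)
        then show "\<exists>y. (L has_real_derivative y) (at x) \<and> 0 \<le> y"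
          using Lder[of x] x that by auto
      next
        have "continuous (at x within {0..s}) L" if "x \<in> {0..s}" for x
        proof -
          have "(L has_real_derivative (D x + ?n)) (at x within {0..})" using Lder[of x] that \<open>s < \<tau>\<close> by auto
          then have "(L has_real_derivative (D x + ?n)) (at x within {0..s})" by (rule DERIV_subset) auto
          then show ?thesis by (rule DERIV_continuous)
        qed
        then show "continuous_on {0..s} L" by (simp add: continuous_on_eq_continuous_within)
      qed
      define c where "c = exp (L 0 - ?n * \<tau>)"
      have cpos: "c > 0" by (simp add: c_def)
      have dbound: "c \<le> det (X s)" if "0 \<le> s" "s < \<tau>" for s
      proof -
        have dp: "det (X s) > 0" using det_pos[OF below[OF that]] .
        have "?n * s \<le> ?n * \<tau>" using that by (intro mult_left_mono) auto
        then have "L 0 - ?n * \<tau> \<le> ln (det (X s))"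
          using Lmono[OF that] unfolding L_def by linarith
        then have "c \<le> exp (ln (det (X s)))" unfolding c_def by simp
        then show ?thesis using dp by simp
      qed
      have left_lim: "l \<le> f \<tau>" if cont: "continuous (at \<tau> within {0..}) f"
          and lb: "\<And>s. 0 < s \<Longrightarrow> s < \<tau> \<Longrightarrow> l \<le> f s" for f :: "real \<Rightarrow> real" and l
      proof -
        have "continuous (at \<tau> within {0..\<tau>}) f" using cont by (rule continuous_within_subset) auto
        then have "(f \<longlongrightarrow> f \<tau>) (at_left \<tau>)"
          using at_within_Icc_at_left[OF tpos] by (simp add: continuous_within)
        moreover have "eventually (\<lambda>s. l \<le> f s) (at_left \<tau>)"
          using eventually_at_left_real[OF tpos] by (rule eventually_mono) (auto intro: lb)
        ultimately show ?thesis by (rule tendsto_lowerbound) simp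
      qed
      have dtau: "c \<le> det (X \<tau>)"
      proof (rule left_lim)
        show "continuous (at \<tau> within {0..}) (\<lambda>s. det (X s))"
          using det_deriv[of X "X' \<tau>" \<tau> "{0..}"] X_deriv tau0 by (auto intro: DERIV_continuous)
        show "\<And>s. 0 < s \<Longrightarrow> s < \<tau> \<Longrightarrow> c \<le> det (X s)" using dbound by simp
      qed
      have psd: "0 \<le> x \<bullet> (X \<tau> *v x)" for x
      proof -
        have "0 \<le> (\<Sum>i\<in>UNIV. \<Sum>j\<in>UNIV. (x$i * x$j) * X \<tau> $ i $ j)"
        proof (rule left_lim)
          show "continuous (at \<tau> within {0..}) (\<lambda>s. \<Sum>i\<in>UNIV. \<Sum>j\<in>UNIV. (x$i * x$j) * X s $ i $ j)"
            using lin_deriv[of X "X' \<tau>" \<tau> "{0..}" "\<lambda>i j. x$i * x$j"] X_deriv tau0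
            by (auto intro: DERIV_continuous)
          show "0 \<le> (\<Sum>i\<in>UNIV. \<Sum>j\<in>UNIV. (x$i * x$j) * X s $ i $ j)" if "0 < s" "s < \<tau>" for s
          proof -
            have "posdef (X s)" using below that by simp
            then have "0 \<le> x \<bullet> (X s *v x)" unfolding posdef_def
              by (cases "x = 0") (auto intro: less_imp_le)
            then show ?thesis by (simp add: quad_eq)
          qed
        qed
        then show ?thesis by (simp add: quad_eq)
      qed
      have stau: "transpose (X \<tau>) = X \<tau>" using sym_all tau0 by simp
      have "invertible (X \<tau>)" using dtau cpos by (simp add: invertible_det_nz)
      then have inv: "matrix_inv (X \<tau>) ** X \<tau> = mat 1" by (rule inv_props)
      have "x \<bullet> (X \<tau> *v x) > 0" if "x \<noteq> 0" for x
      proof (rule ccontr)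
        assume "\<not> x \<bullet> (X \<tau> *v x) > 0"
        then have "x \<bullet> (X \<tau> *v x) = 0" using psd[of x] by simp
        then have "X \<tau> *v x = 0" using psd_zero[OF stau] psd by blast
        then have "matrix_inv (X \<tau>) *v (X \<tau> *v x) = 0" by simp
        then have "x = 0" by (simp add: matrix_vector_mul_assoc inv)
        then show False using that by simp
      qed
      then show ?thesis using stau by (simp add: posdef_def symmetric_mat_def)
    qed
    have "eventually (\<lambda>s. posdef (X s)) (at \<tau> within {0..})"
      using pd_open[of X \<tau> "{0..}"] pdtau has_vector_derivative_continuous[OF X_deriv[rule_format, OF tau0]] sym_all by auto
    then obtain d where d: "d > 0" "\<forall>s\<in>{0..}. s \<noteq> \<tau> \<and> dist s \<tau> < d \<longrightarrow> posdef (X s)"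
      unfolding eventually_at by blast
    have "\<tau> + d \<le> Inf N"
    proof (rule cInf_greatest[OF Nne])
      fix t assume t: "t \<in> N"
      then have t0: "0 \<le> t" and npd: "\<not> posdef (X t)" by (auto simp: N_def)
      show "\<tau> + d \<le> t"
      proof (rule ccontr)
        assume "\<not> \<tau> + d \<le> t"
        then have "t < \<tau> + d" by simp
        moreover have "\<not> t < \<tau>" using below t0 npd by blast
        moreover have "t \<noteq> \<tau>" using pdtau npd by blast
        ultimately have "posdef (X t)" using d t0 by (auto simp: dist_real_def)
        then show False using npd by simp
      qed
    qed
    then show False using d(1) \<tau>_def by simp
  qed
  have part1: "\<forall>t\<ge>0. posdef (X t) \<longrightarrow>
      ((\<lambda>s. ln (det (X s))) has_real_derivative D t) (at t within {0..}) \<and> D t \<ge> - ?n"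
  proof (intro allI impI)
    fix t :: real assume t: "t \<ge> 0" and pdt: "posdef (X t)"
    have "?Am *v vecm (X t) = b" using feas_on[of "t + 1"] allpd t by auto
    then show "((\<lambda>s. ln (det (X s))) has_real_derivative D t) (at t within {0..}) \<and> D t \<ge> - ?n"
      using lnderiv[OF t pdt] by blast
  qed
  show ?thesis using part1 allpd unfolding D_def by blast
qed


end
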